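(* Suppose the ST problem for $(D_{SC},F,B)$ has a positive answer. Then there is a solution $\{\pi(v): v \text{ a source of } D_{SC}\}$ such that (a) $\pi(u_{i,j})=P_{i,j}$ for every $i\in\mathcal U$ and $j\in I_i$, and (b) for every $t\in\{1,\dots,k\}$ there is $l\in\{1,\dots,m\}$ with $\pi(z_t)=(z_t,z)\circ P^h_l$ (concatenation of the arc $(z_t,z)$ with the horizontal path $P^h_l$).
   Context: Snow Team problem (ST): given a digraph $D=(\mathcal V,\mathcal A)$ whose underlying graph is connected, and $F:\mathcal V\to\{0,1\}$, $B:\mathcal V\to\mathbb N$, with $\mathbf k_B=\sum_vB(v)$: do there exist $\mathbf k_B$ directed walks, exactly $B(v)$ of which start at each $v$, such that, letting $H$ be the subgraph consisting of the vertices and arcs of these walks, all vertices of $F^{-1}(1)$ lie in one connected component of the underlying undirected graph of $H$? Such walks form a solution. Construction: $\mathcal U=\{1,\dots,n\}$, $\mathcal S=\{S_1,\dots,S_m\}$ with $S_t\subseteq\mathcal U$, $\bigcup_tS_t=\mathcal U$, and $1\le k\le m$. Write $S_t=\{x_1<\dots<x_{\ell(t)}\}$ and $I_i=\{j: i\in S_j\}$. The digraph $D_{SC}$ has vertices $u_i$ ($i\in\mathcal U$); $u_{i,j},u'_{i,j},v_{i,j},v'_{i,j}$ ($i\in\mathcal U$, $j\in I_i$); and $z,z_1,\dots,z_k$. Its arcs are those of the vertical paths $P_{i,j}=(u_{i,j},u_i,u'_{i,j},v_{i,j},v'_{i,j})$ ($i\in\mathcal U,j\in I_i$), of the horizontal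 paths $P^h_t=(z,v_{x_1,t},v_{x_2,t},\dots,v_{x_{\ell(t)},t})$ ($t\in\{1,\dots,m\}$, with $x_1<\dots<x_{\ell(t)}$ the elements of $S_t$), and the arcs $(z_l,z)$ for $l=1,\dots,k$. Set $F(v)=1$ for all vertices $v$, and $B(v)=1$ if $v$ is a source of $D_{SC}$ (i.e. $v\in\{u_{i,j}\}\cup\{z_1,\dots,z_k\}$) and $B(v)=0$ otherwise. Since $D_{SC}$ is acyclic, every solution consists of one directed path $\pi(v)$ starting at each source $v$. *)

theory Defs
  imports Main
begin

definition is_walk :: "'a set \<Rightarrow> ('a \<times> 'a) set \<Rightarrow> 'a list \<Rightarrow> bool" where
  "is_walk V A w \<longleftrightarrow> w \<noteq> [] \<and> set w \<subseteq> V \<and> (\<forall>i. Suc i < length w \<longrightarrow> (w ! i, w ! Suc i) \<in> A)"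

definition walk_arcs :: "'a list \<Rightarrow> ('a \<times> 'a) set" where
  "walk_arcs w = {(w ! i, w ! Suc i) | i. Suc i < length w}"

text \<open>A family of walks W: for each vertex v and each index i < B v, W v i is the
i-th walk starting at v (so exactly B v walks start at v, k_B in total).\<close>
definition H_vertices :: "'a set \<Rightarrow> ('a \<Rightarrow> nat) \<Rightarrow> ('a \<Rightarrow> nat \<Rightarrow> 'a list) \<Rightarrow> 'a set" where
  "H_vertices V B W = (\<Union>v\<in>V. \<Union>i<B v. set (W v i))"

definition H_arcs :: "'a set \<Rightarrow> ('a \<Rightarrow> nat) \<Rightarrow> ('a \<Rightarrow> nat \<Rightarrow> 'a list) \<Rightarrow> ('a \<times> 'a) set" where
  "H_arcs V B W = (\<Union>v\<in>V. \<Union>i<B v. walk_arcs (W v i))"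

definition st_solution ::
  "'a set \<Rightarrow> ('a \<times> 'a) set \<Rightarrow> ('a \<Rightarrow> nat) \<Rightarrow> ('a \<Rightarrow> nat) \<Rightarrow> ('a \<Rightarrow> nat \<Rightarrow> 'a list) \<Rightarrow> bool" where
  "st_solution V A F B W \<longleftrightarrow>
     (\<forall>v\<in>V. \<forall>i<B v. is_walk V A (W v i) \<and> hd (W v i) = v) \<and>
     (\<forall>x\<in>V. F x = 1 \<longrightarrow> x \<in> H_vertices V B W) \<and>
     (\<forall>x\<in>V. \<forall>y\<in>V. F x = 1 \<longrightarrow> F y = 1 \<longrightarrow>
        (x, y) \<in> (H_arcs V B W \<union> (H_arcs V B W)\<inverse>)\<^sup>*)"

definition st_positive ::
  "'a set \<Rightarrow> ('a \<times> 'a) set \<Rightarrow> ('a \<Rightarrow> nat) \<Rightarrow> ('a \<Rightarrow> nat) \<Rightarrow> bool" where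
  "st_positive V A F B \<longleftrightarrow> (\<exists>W. st_solution V A F B W)"

datatype vtx = U nat | UU nat nat | UU' nat nat | VV nat nat | VV' nat nat | Z | ZZ nat
  (* U i = u_i; UU i j = u_{i,j}; UU' i j = u'_{i,j}; VV i j = v_{i,j}; VV' i j = v'_{i,j};
     Z = z; ZZ l = z_l *)

definition Iset :: "nat \<Rightarrow> (nat \<Rightarrow> nat set) \<Rightarrow> nat \<Rightarrow> nat set" where
  "Iset m S i = {j \<in> {1..m}. i \<in> S j}"

definition vpath :: "nat \<Rightarrow> nat \<Rightarrow> vtx list" where
  "vpath i j = [UU i j, U i, UU' i j, VV i j, VV' i j]"

definition hpath :: "(nat \<Rightarrow> nat set) \<Rightarrow> nat \<Rightarrow> vtx list" where
  "hpath S t = Z # map (\<lambda>x. VV x t) (sorted_list_of_set (S t))"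

definition DSC_V :: "nat \<Rightarrow> nat \<Rightarrow> (nat \<Rightarrow> nat set) \<Rightarrow> nat \<Rightarrow> vtx set" where
  "DSC_V n m S k =
     U ` {1..n}
     \<union> (\<Union>i\<in>{1..n}. \<Union>j\<in>Iset m S i. set (vpath i j))
     \<union> {Z} \<union> ZZ ` {1..k}"

definition DSC_A :: "nat \<Rightarrow> nat \<Rightarrow> (nat \<Rightarrow> nat set) \<Rightarrow> nat \<Rightarrow> (vtx \<times> vtx) set" where
  "DSC_A n m S k =
     (\<Union>i\<in>{1..n}. \<Union>j\<in>Iset m S i. walk_arcs (vpath i j))
     \<union> (\<Union>t\<in>{1..m}. walk_arcs (hpath S t))
     \<union> (\<lambda>l. (ZZ l, Z)) ` {1..k}"

definition DSC_F :: "vtx \<Rightarrow> nat" where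
  "DSC_F v = 1"

definition DSC_B :: "nat \<Rightarrow> nat \<Rightarrow> (nat \<Rightarrow> nat set) \<Rightarrow> nat \<Rightarrow> vtx \<Rightarrow> nat" where
  "DSC_B n m S k v =
     (if (\<exists>i\<in>{1..n}. \<exists>j\<in>Iset m S i. v = UU i j) \<or> (\<exists>l\<in>{1..k}. v = ZZ l) then 1 else 0)"

end

theory Submission
  imports Defs
begin


lemma walk_arcs_Nil[simp]: "walk_arcs [] = {}" by (simp add: walk_arcs_def)
lemma walk_arcs_single[simp]: "walk_arcs [a] = {}" by (simp add: walk_arcs_def)
lemma walk_arcs_Cons2[simp]: "walk_arcs (a # b # xs) = insert (a,b) (walk_arcs (b # xs))"
  unfolding walk_arcs_def
proof (rule set_eqI, rule iffI)
  fix p assume "p \<in> {((a # b # xs) ! i, (a # b # xs) ! Suc i) |i. Suc i < length (a # b # xs)}"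
  then obtain i where "p = ((a # b # xs) ! i, (a # b # xs) ! Suc i)" "Suc i < length (a # b # xs)" by blast
  then show "p \<in> insert (a, b) {((b # xs) ! i, (b # xs) ! Suc i) |i. Suc i < length (b # xs)}"
    by (cases i) auto
next
  fix p assume "p \<in> insert (a, b) {((b # xs) ! i, (b # xs) ! Suc i) |i. Suc i < length (b # xs)}"
  then show "p \<in> {((a # b # xs) ! i, (a # b # xs) ! Suc i) |i. Suc i < length (a # b # xs)}"
  proof
    assume "p = (a,b)"
    moreover have "(a,b) = ((a # b # xs) ! 0, (a # b # xs) ! Suc 0)" "Suc 0 < length (a # b # xs)" by simp_all
    ultimately show ?thesis by blast
  next
    assume "p \<in> {((b # xs) ! i, (b # xs) ! Suc i) |i. Suc i < length (b # xs)}"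
    then obtain i where "p = ((b # xs) ! i, (b # xs) ! Suc i)" "Suc i < length (b # xs)" by blast
    moreover have "((b # xs) ! i, (b # xs) ! Suc i) = ((a # b # xs) ! Suc i, (a # b # xs) ! Suc (Suc i))" by simp
    moreover have "Suc (Suc i) < length (a # b # xs)" using \<open>Suc i < length (b # xs)\<close> by simp
    ultimately show ?thesis by blast
  qed
qed

lemma walk_arcs_Cons_sub: "walk_arcs xs \<subseteq> walk_arcs (a # xs)"
  by (cases xs) auto

lemma is_walk_iff: "is_walk V A w \<longleftrightarrow> w \<noteq> [] \<and> set w \<subseteq> V \<and> walk_arcs w \<subseteq> A"
  unfolding is_walk_def walk_arcs_def by blast

lemma walk_arcs_mem: "(a,b) \<in> walk_arcs w \<longleftrightarrow> (\<exists>q. Suc q < length w \<and> a = w ! q \<and> b = w ! Suc q)"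
  unfolding walk_arcs_def by blast

lemma walk_conn_hd: "x \<in> set w \<Longrightarrow> (hd w, x) \<in> (walk_arcs w)\<^sup>*"
proof (induction w)
  case Nil then show ?case by simp
next
  case (Cons a w)
  show ?case
  proof (cases "x = a")
    case True then show ?thesis by simp
  next
    case False
    then have xw: "x \<in> set w" using Cons.prems by simp
    then obtain b w' where w: "w = b # w'" by (cases w) auto
    have "(b, x) \<in> (walk_arcs w)\<^sup>*" using Cons.IH xw w by simp
    also have "(walk_arcs w)\<^sup>* \<subseteq> (walk_arcs (a # w))\<^sup>*"
      by (rule rtrancl_mono[OF walk_arcs_Cons_sub])
    finally have "(b, x) \<in> (walk_arcs (a # w))\<^sup>*" .
    moreover have "(a, b) \<in> walk_arcs (a # w)" using w by simp
    ultimately show ?thesis by simp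
  qed
qed

lemma walk_conn:
  assumes "walk_arcs w \<subseteq> H" "x \<in> set w" "y \<in> set w"
  shows "(x, y) \<in> (H \<union> H\<inverse>)\<^sup>*"
proof -
  have sub: "(walk_arcs w)\<^sup>* \<subseteq> (H \<union> H\<inverse>)\<^sup>*" using assms(1) by (intro rtrancl_mono) blast
  have 1: "(hd w, x) \<in> (H \<union> H\<inverse>)\<^sup>*" using walk_conn_hd[OF assms(2)] sub by blast
  have 2: "(hd w, y) \<in> (H \<union> H\<inverse>)\<^sup>*" using walk_conn_hd[OF assms(3)] sub by blast
  have "(x, hd w) \<in> (H \<union> H\<inverse>)\<^sup>*" using 1
    by (metis converse_Un converse_converse rtrancl_converseI sup_commute)
  then show ?thesis using 2 by (rule rtrancl_trans)
qed

lemma walk_arcs_sorted: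
  "sorted_wrt (<) (ys::nat list) \<Longrightarrow> walk_arcs (map f ys) \<subseteq> {(f a, f b) | a b. a \<in> set ys \<and> b \<in> set ys \<and> a < b}"
proof (induction ys)
  case Nil then show ?case by simp
next
  case (Cons a ys)
  show ?case
  proof (cases ys)
    case Nil then show ?thesis by simp
  next
    case (Cons b ys')
    then show ?thesis using Cons.IH Cons.prems by (simp; blast)
  qed
qed

lemma walk_arcs_vpath: "walk_arcs (vpath i j) = {(UU i j, U i), (U i, UU' i j), (UU' i j, VV i j), (VV i j, VV' i j)}"
  by (auto simp: vpath_def)

lemma walk_arcs_hpath:
  assumes "finite (S t)"
  shows "walk_arcs (hpath S t) \<subseteq> {(Z, VV x t) | x. x \<in> S t} \<union> {(VV a t, VV b t) | a b. a \<in> S t \<and> b \<in> S t \<and> a < b}"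
proof -
  let ?xs = "sorted_list_of_set (S t)"
  have s: "sorted_wrt (<) ?xs" by simp
  have st: "set ?xs = S t" using assms by simp
  show ?thesis
  proof (cases ?xs)
    case Nil then show ?thesis by (simp add: hpath_def)
  next
    case (Cons a ys)
    have "walk_arcs (map (\<lambda>x. VV x t) ?xs) \<subseteq> {(VV a t, VV b t) | a b. a \<in> S t \<and> b \<in> S t \<and> a < b}"
      using walk_arcs_sorted[OF s, of "\<lambda>x. VV x t"] st by blast
    moreover have "a \<in> S t" using Cons st by (metis list.set_intros(1))
    ultimately show ?thesis using Cons unfolding hpath_def by auto
  qed
qed



fun rank :: "vtx \<Rightarrow> nat" where
  "rank (U i) = 1" | "rank (UU i j) = 0" | "rank (UU' i j) = 2" | "rank (VV i j) = 3 + i"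
| "rank (VV' i j) = 4 + i" | "rank Z = 1" | "rank (ZZ l) = 0"

locale dsc =
  fixes n m k :: nat and S :: "nat \<Rightarrow> nat set"
  assumes S_sub: "\<forall>t\<in>{1..m}. S t \<subseteq> {1..n}"
    and S_cover: "(\<Union>t\<in>{1..m}. S t) = {1..n}"
    and k_ge: "1 \<le> k" and k_le: "k \<le> m"
begin

abbreviation "VS \<equiv> DSC_V n m S k"
abbreviation "AS \<equiv> DSC_A n m S k"
abbreviation "BS \<equiv> DSC_B n m S k"

lemma fin_S: "t \<in> {1..m} \<Longrightarrow> finite (S t)"
  using S_sub finite_subset by blast

lemma Iset_iff: "j \<in> Iset m S i \<longleftrightarrow> j \<in> {1..m} \<and> i \<in> S j"
  by (simp add: Iset_def)

lemma in_S: "t \<in> {1..m} \<Longrightarrow> x \<in> S t \<Longrightarrow> x \<in> {1..n} \<and> t \<in> Iset m S x"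
proof -
  assume a: "t \<in> {1..m}" "x \<in> S t"
  then have "S t \<subseteq> {1..n}" using S_sub by blast
  then have "x \<in> {1..n}" using a(2) by blast
  then show ?thesis using a by (simp add: Iset_def)
qed

lemma arc_cases:
  assumes "(a,b) \<in> AS"
  shows "(\<exists>i j. i \<in> {1..n} \<and> j \<in> Iset m S i \<and>
            ((a,b) = (UU i j, U i) \<or> (a,b) = (U i, UU' i j) \<or> (a,b) = (UU' i j, VV i j) \<or> (a,b) = (VV i j, VV' i j)))
       \<or> (\<exists>t\<in>{1..m}. \<exists>x\<in>S t. (a,b) = (Z, VV x t))
       \<or> (\<exists>t\<in>{1..m}. \<exists>x\<in>S t. \<exists>y\<in>S t. x < y \<and> (a,b) = (VV x t, VV y t))
       \<or> (\<exists>l\<in>{1..k}. (a,b) = (ZZ l, Z))"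
proof -
  have "(a,b) \<in> (\<Union>i\<in>{1..n}. \<Union>j\<in>Iset m S i. walk_arcs (vpath i j)) \<or> (a,b) \<in> (\<Union>t\<in>{1..m}. walk_arcs (hpath S t))
     \<or> (a,b) \<in> (\<lambda>l. (ZZ l, Z)) ` {1..k}" using assms unfolding DSC_A_def by (simp only: Un_iff disj_assoc)
  then show ?thesis
  proof (elim disjE)
    assume "(a,b) \<in> (\<Union>i\<in>{1..n}. \<Union>j\<in>Iset m S i. walk_arcs (vpath i j))"
    then obtain i j where v: "i \<in> {1..n}" "j \<in> Iset m S i" "(a,b) \<in> walk_arcs (vpath i j)" by (elim UN_E)
    then have "(a,b) = (UU i j, U i) \<or> (a,b) = (U i, UU' i j) \<or> (a,b) = (UU' i j, VV i j) \<or> (a,b) = (VV i j, VV' i j)"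
      unfolding walk_arcs_vpath by simp
    then have "\<exists>i j. i \<in> {1..n} \<and> j \<in> Iset m S i \<and>
            ((a,b) = (UU i j, U i) \<or> (a,b) = (U i, UU' i j) \<or> (a,b) = (UU' i j, VV i j) \<or> (a,b) = (VV i j, VV' i j))"
      using v(1,2) by blast
    then show ?thesis by (rule disjI1)
  next
    assume "(a,b) \<in> (\<Union>t\<in>{1..m}. walk_arcs (hpath S t))"
    then obtain t where h: "t \<in> {1..m}" "(a,b) \<in> walk_arcs (hpath S t)" by (elim UN_E)
    have "(a,b) \<in> {(Z, VV x t) | x. x \<in> S t} \<union> {(VV a t, VV b t) | a b. a \<in> S t \<and> b \<in> S t \<and> a < b}"
      using subsetD[OF walk_arcs_hpath[of S t, OF fin_S[OF h(1)]] h(2)] .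
    then consider x where "x \<in> S t" "(a,b) = (Z, VV x t)" | x y where "x \<in> S t" "y \<in> S t" "x < y" "(a,b) = (VV x t, VV y t)"
      by blast
    then show ?thesis
    proof cases
      case 1
      then have "\<exists>t\<in>{1..m}. \<exists>x\<in>S t. (a,b) = (Z, VV x t)" using h(1) by blast
      then show ?thesis by (rule disjI2[OF disjI1])
    next
      case 2
      then have "\<exists>t\<in>{1..m}. \<exists>x\<in>S t. \<exists>y\<in>S t. x < y \<and> (a,b) = (VV x t, VV y t)" using h(1) by blast
      then show ?thesis by (rule disjI2[OF disjI2[OF disjI1]])
    qed
  next
    assume "(a,b) \<in> (\<lambda>l. (ZZ l, Z)) ` {1..k}"
    then have "\<exists>l\<in>{1..k}. (a,b) = (ZZ l, Z)" by blast
    then show ?thesis by (rule disjI2[OF disjI2[OF disjI2]])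
  qed
qed

lemma rank_arc: "(a,b) \<in> AS \<Longrightarrow> rank a < rank b"
  by (drule arc_cases) auto

lemma rank_walk:
  assumes "is_walk VS AS w" "i \<le> j" "j < length w"
  shows "rank (w ! i) + (j - i) \<le> rank (w ! j)"
  using assms(2,3)
proof (induction j)
  case 0 then show ?case by simp
next
  case (Suc j)
  show ?case
  proof (cases "i = Suc j")
    case True then show ?thesis by simp
  next
    case False
    then have "i \<le> j" using Suc.prems by simp
    then have IH: "rank (w ! i) + (j - i) \<le> rank (w ! j)" using Suc by simp
    have "(w ! j, w ! Suc j) \<in> AS" using assms(1) Suc.prems unfolding is_walk_def by blast
    then have "rank (w ! j) < rank (w ! Suc j)" by (rule rank_arc)
    then show ?thesis using IH \<open>i \<le> j\<close> by simp
  qed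
qed

lemma walk_inj:
  assumes "is_walk VS AS w" "i < length w" "j < length w" "w ! i = w ! j"
  shows "i = j"
proof (rule ccontr)
  assume "i \<noteq> j"
  then consider "i < j" | "j < i" by linarith
  then show False
  proof cases
    case 1 then show False using rank_walk[OF assms(1), of i j] assms by simp
  next
    case 2 then show False using rank_walk[OF assms(1), of j i] assms by simp
  qed
qed

lemma walk_arc:
  assumes "is_walk VS AS w" "Suc q < length w"
  shows "(w ! q, w ! Suc q) \<in> AS"
  using assms unfolding is_walk_def by blast

lemma pred_UU': "(a, UU' x j) \<in> AS \<Longrightarrow> a = U x"
  by (drule arc_cases) auto
lemma pred_U: "(a, U x) \<in> AS \<Longrightarrow> \<exists>j. j \<in> Iset m S x \<and> x \<in> {1..n} \<and> a = UU x j"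
  by (drule arc_cases) auto
lemma succ_U: "(U x, b) \<in> AS \<Longrightarrow> \<exists>j. j \<in> Iset m S x \<and> b = UU' x j"
  by (drule arc_cases) auto
lemma succ_UU: "(UU x a, b) \<in> AS \<Longrightarrow> b = U x"
  by (drule arc_cases) auto
lemma succ_UU': "(UU' x j, b) \<in> AS \<Longrightarrow> b = VV x j"
  by (drule arc_cases) auto
lemma pred_VV': "(a, VV' x j) \<in> AS \<Longrightarrow> a = VV x j"
  by (drule arc_cases) auto
lemma succ_VV': "(VV' x j, b) \<notin> AS"
  using arc_cases[of "VV' x j" b] by auto
lemma pred_Z: "(a, Z) \<in> AS \<Longrightarrow> \<exists>l\<in>{1..k}. a = ZZ l"
  by (drule arc_cases) auto
lemma pred_VV: "(a, VV y j) \<in> AS \<Longrightarrow>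
   (a = UU' y j \<and> j \<in> Iset m S y) \<or> (a = Z \<and> j \<in> {1..m} \<and> y \<in> S j)
   \<or> (\<exists>x. x < y \<and> a = VV x j \<and> x \<in> S j \<and> y \<in> S j \<and> j \<in> {1..m})"
  by (drule arc_cases) auto

end


locale sol = dsc +
  fixes W0 :: "vtx \<Rightarrow> nat \<Rightarrow> vtx list"
  assumes sol: "st_solution VS AS DSC_F BS W0"
begin

definition src :: "vtx \<Rightarrow> bool" where "src v \<longleftrightarrow> v \<in> VS \<and> BS v = 1"

abbreviation "H \<equiv> H_arcs VS BS W0"

lemma src_cases: "src v \<Longrightarrow> (\<exists>i j. i\<in>{1..n} \<and> j \<in> Iset m S i \<and> v = UU i j) \<or> (\<exists>l\<in>{1..k}. v = ZZ l)"
proof -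
  assume "src v"
  then have "BS v = 1" unfolding src_def by blast
  then have "(\<exists>i\<in>{1..n}. \<exists>j\<in>Iset m S i. v = UU i j) \<or> (\<exists>l\<in>{1..k}. v = ZZ l)"
    unfolding DSC_B_def by (cases "(\<exists>i\<in>{1..n}. \<exists>j\<in>Iset m S i. v = UU i j) \<or> (\<exists>l\<in>{1..k}. v = ZZ l)") simp_all
  then show ?thesis by blast
qed

lemma src_walk: assumes "src v" shows "is_walk VS AS (W0 v 0)" "W0 v 0 ! 0 = v"
proof -
  have "v \<in> VS" "0 < BS v" using assms unfolding src_def by auto
  then have "is_walk VS AS (W0 v 0) \<and> hd (W0 v 0) = v" using sol unfolding st_solution_def by blast
  then show "is_walk VS AS (W0 v 0)" "W0 v 0 ! 0 = v" by (auto simp: is_walk_def hd_conv_nth)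
qed

lemma src_len: "src v \<Longrightarrow> 0 < length (W0 v 0)"
  using src_walk(1) unfolding is_walk_def by blast

lemma H_vert: assumes "x \<in> VS" shows "\<exists>v q. src v \<and> q < length (W0 v 0) \<and> W0 v 0 ! q = x"
proof -
  have "x \<in> H_vertices VS BS W0" using sol assms unfolding st_solution_def DSC_F_def by blast
  then obtain v i where v: "v \<in> VS" "i < BS v" "x \<in> set (W0 v i)" unfolding H_vertices_def by blast
  then have "i = 0" "BS v = 1" unfolding DSC_B_def by (simp_all split: if_splits)
  then show ?thesis using v unfolding src_def by (metis in_set_conv_nth)
qed

lemma H_arc: assumes "(a,b) \<in> H"
  shows "\<exists>v q. src v \<and> Suc q < length (W0 v 0) \<and> W0 v 0 ! q = a \<and> W0 v 0 ! Suc q = b"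
proof -
  obtain v i where v: "v \<in> VS" "i < BS v" "(a,b) \<in> walk_arcs (W0 v i)" using assms unfolding H_arcs_def by blast
  then have "i = 0" "BS v = 1" unfolding DSC_B_def by (simp_all split: if_splits)
  then show ?thesis using v unfolding src_def walk_arcs_mem by metis
qed

lemma walk_H: assumes "src v" "Suc q < length (W0 v 0)" shows "(W0 v 0 ! q, W0 v 0 ! Suc q) \<in> H"
proof -
  have "v \<in> VS" "0 < BS v" using assms unfolding src_def by auto
  moreover have "(W0 v 0 ! q, W0 v 0 ! Suc q) \<in> walk_arcs (W0 v 0)" using assms(2) unfolding walk_arcs_mem by blast
  ultimately show ?thesis unfolding H_arcs_def by blast
qed

lemma src_rank0: "src v \<Longrightarrow> rank v = 0"
  using src_cases by fastforce

lemma rank_pos: assumes "src v" "q < length (W0 v 0)" shows "q \<le> rank (W0 v 0 ! q)"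
  using rank_walk[OF src_walk(1)[OF assms(1)], of 0 q] assms src_walk(2)[OF assms(1)] src_rank0[OF assms(1)] by simp

lemma walk_arc': assumes "src v" "Suc q < length (W0 v 0)" shows "(W0 v 0 ! q, W0 v 0 ! Suc q) \<in> AS"
  using walk_arc[OF src_walk(1)[OF assms(1)] assms(2)] .

lemma UU'_pos:
  assumes "src v" "q < length (W0 v 0)" "W0 v 0 ! q = UU' x j"
  shows "q = 2 \<and> W0 v 0 ! 1 = U x \<and> (\<exists>a. a \<in> Iset m S x \<and> x \<in> {1..n} \<and> v = UU x a)"
proof -
  let ?w = "W0 v 0"
  have "q \<le> 2" using rank_pos[OF assms(1,2)] assms(3) by simp
  have "q \<noteq> 0"
  proof
    assume "q = 0" then have "v = UU' x j" using assms(3) src_walk(2)[OF assms(1)] by simp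
    then show False using src_cases[OF assms(1)] by auto
  qed
  then obtain q' where q: "q = Suc q'" by (cases q) auto
  have "(?w ! q', ?w ! q) \<in> AS" using walk_arc'[OF assms(1)] assms(2) q by simp
  then have 1: "?w ! q' = U x" using assms(3) pred_UU' by simp
  have "q' \<noteq> 0"
  proof
    assume "q' = 0" then have "v = U x" using 1 src_walk(2)[OF assms(1)] by simp
    then show False using src_cases[OF assms(1)] by auto
  qed
  then obtain q'' where q'': "q' = Suc q''" by (cases q') auto
  have "(?w ! q'', ?w ! q') \<in> AS" using walk_arc'[OF assms(1)] assms(2) q q'' by simp
  then obtain a where a: "a \<in> Iset m S x" "x \<in> {1..n}" "?w ! q'' = UU x a" using 1 pred_U by metis
  have "q'' = 0" using \<open>q \<le> 2\<close> q q'' by simp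
  have "?w ! 0 = v" using src_walk(2)[OF assms(1)] .
  then have "v = UU x a" using a(3) \<open>q'' = 0\<close> by simp
  moreover have "?w ! 1 = U x" using 1 q q'' \<open>q'' = 0\<close> by simp
  moreover have "q = 2" using q q'' \<open>q'' = 0\<close> by simp
  ultimately show ?thesis using a by blast
qed

lemma Z_pos:
  assumes "src v" "q < length (W0 v 0)" "W0 v 0 ! q = Z"
  shows "q = 1 \<and> (\<exists>l\<in>{1..k}. v = ZZ l)"
proof -
  let ?w = "W0 v 0"
  have "q \<le> 1" using rank_pos[OF assms(1,2)] assms(3) by simp
  have "q \<noteq> 0"
  proof
    assume "q = 0" then have "v = Z" using assms(3) src_walk(2)[OF assms(1)] by simp
    then show False using src_cases[OF assms(1)] by auto
  qed
  then have q: "q = Suc 0" using \<open>q \<le> 1\<close> by simp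
  have "(?w ! 0, ?w ! q) \<in> AS" using walk_arc'[OF assms(1)] assms(2) q by simp
  then have "\<exists>l\<in>{1..k}. ?w ! 0 = ZZ l" using assms(3) pred_Z by simp
  then show ?thesis using q src_walk(2)[OF assms(1)] by simp
qed

end


context dsc begin

lemma vpath_V: "i \<in> {1..n} \<Longrightarrow> j \<in> Iset m S i \<Longrightarrow> set (vpath i j) \<subseteq> VS"
  unfolding DSC_V_def by blast
lemma U_V: "i \<in> {1..n} \<Longrightarrow> U i \<in> VS" unfolding DSC_V_def by blast
lemma Z_V: "Z \<in> VS" unfolding DSC_V_def by blast
lemma ZZ_V: "l \<in> {1..k} \<Longrightarrow> ZZ l \<in> VS" unfolding DSC_V_def by blast
lemma B_UU: "i \<in> {1..n} \<Longrightarrow> j \<in> Iset m S i \<Longrightarrow> BS (UU i j) = 1" unfolding DSC_B_def by auto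
lemma B_ZZ: "l \<in> {1..k} \<Longrightarrow> BS (ZZ l) = 1" unfolding DSC_B_def by auto

end

context sol begin

lemma src_UU: "i \<in> {1..n} \<Longrightarrow> j \<in> Iset m S i \<Longrightarrow> src (UU i j)"
  unfolding src_def using vpath_V[of i j] B_UU[of i j] by (auto simp: vpath_def)

lemma H_sub: "H \<subseteq> AS"
proof
  fix p assume "p \<in> H"
  then obtain a b where p: "p = (a,b)" "(a,b) \<in> H" by (cases p) auto
  then obtain v q where "src v" "Suc q < length (W0 v 0)" "W0 v 0 ! q = a" "W0 v 0 ! Suc q = b"
    using H_arc by blast
  then show "p \<in> AS" using walk_arc' p(1) by blast
qed

lemma UU'_unique:
  assumes "src v" "src v'" "2 < length (W0 v 0)" "2 < length (W0 v' 0)"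
    "W0 v 0 ! 2 = UU' x j" "W0 v' 0 ! 2 = UU' x j"
  shows "v = v'"
proof -
  obtain a where a: "a \<in> Iset m S x" "x \<in> {1..n}" "v = UU x a" using UU'_pos[OF assms(1,3,5)] by blast
  obtain a' where a': "a' \<in> Iset m S x" "v' = UU x a'" using UU'_pos[OF assms(2,4,6)] by blast
  define I where "I = Iset m S x"
  have finI: "finite I" unfolding I_def Iset_def by simp
  define A' where "A' = {a\<in>I. 2 < length (W0 (UU x a) 0)}"
  define g where "g a = (case W0 (UU x a) 0 ! 2 of UU' _ j \<Rightarrow> j | _ \<Rightarrow> 0)" for a
  have gA: "g a \<in> I \<and> W0 (UU x a) 0 ! 2 = UU' x (g a)" if "a \<in> A'" for a
  proof -
    have s: "src (UU x a)" using that a(2) src_UU unfolding A'_def I_def by blast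
    have len: "2 < length (W0 (UU x a) 0)" using that unfolding A'_def by simp
    have "(W0 (UU x a) 0 ! 0, W0 (UU x a) 0 ! 1) \<in> AS" using walk_arc'[OF s, of 0] len by simp
    then have 1: "W0 (UU x a) 0 ! 1 = U x" using src_walk(2)[OF s] succ_UU by simp
    have "(W0 (UU x a) 0 ! 1, W0 (UU x a) 0 ! 2) \<in> AS" using walk_arc'[OF s, of 1] len by (simp add: numeral_2_eq_2)
    then obtain jj where "jj \<in> Iset m S x" "W0 (UU x a) 0 ! 2 = UU' x jj" using 1 succ_U by metis
    then show ?thesis unfolding g_def I_def by simp
  qed
  have "I \<subseteq> g ` A'"
  proof
    fix jj assume jj: "jj \<in> I"
    have "UU' x jj \<in> VS" using vpath_V[of x jj] a(2) jj unfolding I_def vpath_def by simp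
    then obtain v'' q where v'': "src v''" "q < length (W0 v'' 0)" "W0 v'' 0 ! q = UU' x jj"
      using H_vert by blast
    then obtain a'' where a'': "q = 2" "a'' \<in> Iset m S x" "v'' = UU x a''" using UU'_pos by blast
    then have "a'' \<in> A'" using v'' unfolding A'_def I_def by simp
    moreover have "g a'' = jj" using gA[OF \<open>a'' \<in> A'\<close>] v'' a'' by simp
    ultimately show "jj \<in> g ` A'" by blast
  qed
  moreover have "g ` A' \<subseteq> I" using gA by blast
  ultimately have eq: "g ` A' = I" by blast
  have "A' \<subseteq> I" unfolding A'_def by blast
  then have "card A' \<le> card I" using finI card_mono by blast
  moreover have "card (g ` A') \<le> card A'" using card_image_le finite_subset[OF \<open>A' \<subseteq> I\<close> finI] by blast
  ultimately have "card (g ` A') = card A'" using eq by simp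
  then have inj: "inj_on g A'" using eq_card_imp_inj_on finite_subset[OF \<open>A' \<subseteq> I\<close> finI] by blast
  have aA: "a \<in> A'" using a assms(3) unfolding A'_def I_def by simp
  have aA': "a' \<in> A'" using a' assms(4) unfolding A'_def I_def by simp
  have "g a = j" using gA[OF aA] a(3) assms(5) by simp
  moreover have "g a' = j" using gA[OF aA'] a'(2) assms(6) by simp
  ultimately have "a = a'" using inj aA aA' inj_on_def by metis
  then show ?thesis using a a' by simp
qed

definition T :: "nat set" where "T = {l\<in>{1..m}. \<exists>x. (Z, VV x l) \<in> H}"

lemma VV_back:
  assumes "src v" "p < length (W0 v 0)" "W0 v 0 ! p = VV y j" "j \<notin> T"
  shows "\<exists>x\<le>y. x \<in> S j \<and> 2 < length (W0 v 0) \<and> W0 v 0 ! 2 = UU' x j"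
  using assms(2,3)
proof (induction p arbitrary: y)
  case 0
  then have "v = VV y j" using src_walk(2)[OF assms(1)] by simp
  then show ?case using src_cases[OF assms(1)] by auto
next
  case (Suc p)
  let ?w = "W0 v 0"
  have arcA: "(?w ! p, VV y j) \<in> AS" using walk_arc'[OF assms(1) Suc.prems(1)] Suc.prems(2) by simp
  have arcH: "(?w ! p, VV y j) \<in> H" using walk_H[OF assms(1) Suc.prems(1)] Suc.prems(2) by simp
  from pred_VV[OF arcA] consider "?w ! p = UU' y j" "j \<in> Iset m S y" | "?w ! p = Z" "j \<in> {1..m}"
    | x where "x < y" "?w ! p = VV x j" by blast
  then show ?case
  proof cases
    case 1
    then have "p = 2" using UU'_pos[OF assms(1), of p] Suc.prems by simp
    then show ?thesis using 1 Suc.prems by (auto simp: Iset_iff)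
  next
    case 2
    then have "j \<in> T" using arcH unfolding T_def by auto
    then show ?thesis using assms(4) by simp
  next
    case 3
    then obtain x' where "x' \<le> x" "x' \<in> S j" "2 < length ?w" "?w ! 2 = UU' x' j"
      using Suc.IH[of x] Suc.prems by auto
    then show ?thesis using 3(1) by (intro exI[of _ x']) simp
  qed
qed

lemma src_not: "src v \<Longrightarrow> (\<exists>i j. v = UU i j) \<or> (\<exists>l. v = ZZ l)"
  using src_cases by blast

lemma nz: assumes "src v" "W0 v 0 ! q = y" "\<not>(\<exists>i j. y = UU i j)" "\<not>(\<exists>l. y = ZZ l)" shows "q \<noteq> 0"
proof
  assume "q = 0" then have "y = v" using assms(2) src_walk(2)[OF assms(1)] by simp
  then show False using src_not[OF assms(1)] assms(3,4) by blast
qed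

lemma path_exact:
  assumes "j \<in> {1..m}" "j \<notin> T"
  shows "x \<in> S j \<Longrightarrow> src v \<Longrightarrow> 2 < length (W0 v 0) \<Longrightarrow> W0 v 0 ! 2 = UU' x j \<Longrightarrow>
         length (W0 v 0) = 5 \<and> W0 v 0 ! 3 = VV x j \<and> W0 v 0 ! 4 = VV' x j"
proof (induction x arbitrary: v rule: less_induct)
  case (less x)
  have xn: "x \<in> {1..n}" "j \<in> Iset m S x" using in_S[OF assms(1) less.prems(1)] by auto
  have "VV' x j \<in> VS" using vpath_V[OF xn] unfolding vpath_def by simp
  then obtain v' p where v': "src v'" "p < length (W0 v' 0)" "W0 v' 0 ! p = VV' x j" using H_vert by blast
  have "p \<noteq> 0"
  proof
    assume "p = 0" then have "v' = VV' x j" using v' src_walk(2)[OF v'(1)] by simp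
    then show False using src_not[OF v'(1)] by auto
  qed
  then obtain p0 where p: "p = Suc p0" by (cases p) auto
  have "(W0 v' 0 ! p0, VV' x j) \<in> AS" using walk_arc'[OF v'(1), of p0] v' p by simp
  then have p0: "W0 v' 0 ! p0 = VV x j" using pred_VV' by simp
  obtain x' where x': "x' \<le> x" "x' \<in> S j" "2 < length (W0 v' 0)" "W0 v' 0 ! 2 = UU' x' j"
    using VV_back[OF v'(1) _ p0 assms(2)] v'(2) p by auto
  have "x' = x"
  proof (rule ccontr)
    assume "x' \<noteq> x"
    then have "x' < x" using x'(1) by simp
    then have e: "length (W0 v' 0) = 5" "W0 v' 0 ! 4 = VV' x' j" using less.IH[OF _ x'(2) v'(1) x'(3,4)] by auto
    have "p = 4"
    proof (rule ccontr)
      assume "p \<noteq> 4"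
      then have "Suc p < length (W0 v' 0)" using v'(2) e(1) by simp
      then have "(W0 v' 0 ! p, W0 v' 0 ! Suc p) \<in> AS" using walk_arc'[OF v'(1)] by blast
      then show False using v'(3) succ_VV' by simp
    qed
    then have "VV' x j = VV' x' j" using v'(3) e(2) by simp
    then show False using \<open>x' \<noteq> x\<close> by simp
  qed
  then have "v' = v" using UU'_unique[OF v'(1) less.prems(2) x'(3) less.prems(3)] x'(4) less.prems(4) by simp
  then have w0: "W0 v 0 ! p0 = VV x j" "p < length (W0 v 0)" "W0 v 0 ! p = VV' x j" using p0 v' by auto
  let ?w = "W0 v 0"
  have pos: "?w ! 1 = U x" using UU'_pos[OF less.prems(2) less.prems(3) less.prems(4)] by simp
  have "p0 \<noteq> 0" using nz[OF less.prems(2) w0(1)] by simp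
  moreover have "p0 \<noteq> 1" using w0(1) pos by auto
  moreover have "p0 \<noteq> 2" using w0(1) less.prems(4) by auto
  ultimately have "3 \<le> p0" by simp
  then have "3 < length ?w" using w0(2) p by simp
  then have "(?w ! 2, ?w ! 3) \<in> AS" using walk_arc'[OF less.prems(2), of 2] by simp
  then have w3: "?w ! 3 = VV x j" using less.prems(4) succ_UU' by simp
  have "p0 = 3" using walk_inj[OF src_walk(1)[OF less.prems(2)], of p0 3] w0 w3 p \<open>3 < length ?w\<close> by simp
  then have p4: "p = 4" using p by simp
  have "length ?w = 5"
  proof (rule ccontr)
    assume "length ?w \<noteq> 5"
    then have "5 < length ?w" using w0(2) p4 by simp
    then have "(?w ! 4, ?w ! 5) \<in> AS" using walk_arc'[OF less.prems(2), of 4] by simp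
    then show False using w0(3) p4 succ_VV' by simp
  qed
  then show ?case using w3 w0(3) p4 by simp
qed

lemma no_horiz:
  assumes "j \<in> {1..m}" "j \<notin> T" "(VV a j, VV b j) \<in> H"
  shows False
proof -
  obtain v q where vq: "src v" "Suc q < length (W0 v 0)" "W0 v 0 ! q = VV a j" "W0 v 0 ! Suc q = VV b j"
    using H_arc[OF assms(3)] by blast
  obtain x where x: "x \<in> S j" "2 < length (W0 v 0)" "W0 v 0 ! 2 = UU' x j"
    using VV_back[OF vq(1) _ vq(3) assms(2)] vq(2) by auto
  have e: "length (W0 v 0) = 5" "W0 v 0 ! 3 = VV x j" "W0 v 0 ! 4 = VV' x j"
    using path_exact[OF assms(1,2) x(1) vq(1) x(2,3)] by auto
  have pos: "W0 v 0 ! 1 = U x" using UU'_pos[OF vq(1) x(2,3)] by simp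
  have "q \<noteq> 0" using nz[OF vq(1) vq(3)] by simp
  moreover have "q \<noteq> 1" using vq(3) pos by auto
  moreover have "q \<noteq> 2" using vq(3) x(3) by auto
  ultimately have "q = 3" using vq(2) e(1) by simp
  then show False using vq(4) e(3) by simp
qed

end


context sol begin

lemma T_sub: "T \<subseteq> {1..m}" unfolding T_def by blast
lemma T_fin: "finite T" using T_sub finite_subset by blast

lemma card_T: "card T \<le> k"
proof -
  define P where "P t l \<longleftrightarrow> t \<in> {1..k} \<and> src (ZZ t) \<and> (\<exists>x q. Suc q < length (W0 (ZZ t) 0) \<and> W0 (ZZ t) 0 ! q = Z \<and> W0 (ZZ t) 0 ! Suc q = VV x l)" for t l
  have ex: "\<exists>t. P t l" if lT: "l \<in> T" for l
  proof -
    obtain x where "(Z, VV x l) \<in> H" using lT unfolding T_def by blast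
    then obtain v q where vq: "src v" "Suc q < length (W0 v 0)" "W0 v 0 ! q = Z" "W0 v 0 ! Suc q = VV x l"
      using H_arc by blast
    then obtain t where "t \<in> {1..k}" "v = ZZ t" using Z_pos[OF vq(1), of q] by auto
    then show ?thesis unfolding P_def using vq by blast
  qed
  define h where "h l = (SOME t. P t l)" for l
  have hP: "P (h l) l" if "l \<in> T" for l unfolding h_def using ex[OF that] by (rule someI_ex)
  have "inj_on h T"
  proof (rule inj_onI)
    fix l l' assume l: "l \<in> T" "l' \<in> T" "h l = h l'"
    obtain x q where 1: "Suc q < length (W0 (ZZ (h l)) 0)" "W0 (ZZ (h l)) 0 ! q = Z" "W0 (ZZ (h l)) 0 ! Suc q = VV x l"
      using hP[OF l(1)] unfolding P_def by blast
    obtain x' q' where 2: "Suc q' < length (W0 (ZZ (h l)) 0)" "W0 (ZZ (h l)) 0 ! q' = Z" "W0 (ZZ (h l)) 0 ! Suc q' = VV x' l'"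
      using hP[OF l(2)] l(3) unfolding P_def by metis
    have s: "src (ZZ (h l))" using hP[OF l(1)] unfolding P_def by blast
    have "q = q'" using walk_inj[OF src_walk(1)[OF s], of q q'] 1 2 by simp
    then show "l = l'" using 1(3) 2(3) by simp
  qed
  moreover have "h ` T \<subseteq> {1..k}" using hP unfolding P_def by blast
  ultimately have "card T \<le> card {1..k}" using card_inj_on_le by blast
  then show ?thesis by simp
qed

lemma T_cover:
  assumes i: "i \<in> {1..n}"
  shows "\<exists>l\<in>T. i \<in> S l"
proof (rule ccontr)
  assume nc: "\<not> (\<exists>l\<in>T. i \<in> S l)"
  define C where "C = {a. a = U i \<or> (\<exists>j\<in>Iset m S i. a = UU i j \<or> a = UU' i j \<or> a = VV i j \<or> a = VV' i j)}"
  have clos: "a \<in> C \<longleftrightarrow> b \<in> C" if ab: "(a,b) \<in> H" for a b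
  proof -
    have "(a,b) \<in> AS" using ab H_sub by blast
    from arc_cases[OF this] consider
       (c1) i' j' where "i' \<in> {1..n}" "j' \<in> Iset m S i'"
        "(a, b) = (UU i' j', U i') \<or> (a, b) = (U i', UU' i' j') \<or> (a, b) = (UU' i' j', VV i' j') \<or> (a, b) = (VV i' j', VV' i' j')"
     | (c2) t x where "t \<in> {1..m}" "x \<in> S t" "(a, b) = (Z, VV x t)"
     | (c3) t x y where "t \<in> {1..m}" "x \<in> S t" "y \<in> S t" "x < y" "(a, b) = (VV x t, VV y t)"
     | (c4) l where "l \<in> {1..k}" "(a, b) = (ZZ l, Z)"
      by blast
    then show ?thesis
    proof cases
      case c1
      note h = c1
      show ?thesis
      proof (cases "i' = i")
        case True then show ?thesis using h unfolding C_def by auto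
      next
        case False then show ?thesis using h unfolding C_def by auto
      qed
    next
      case c2
      note h = c2
      have "VV x t \<notin> C"
      proof
        assume "VV x t \<in> C"
        then have "x = i" "t \<in> Iset m S i" unfolding C_def by auto
        moreover have "t \<in> T" using ab h unfolding T_def by auto
        ultimately show False using nc by (auto simp: Iset_iff)
      qed
      moreover have "Z \<notin> C" unfolding C_def by auto
      ultimately show ?thesis using h by simp
    next
      case c3
      note h = c3
      have "VV x t \<notin> C \<and> VV y t \<notin> C"
      proof (rule ccontr)
        assume "\<not> (VV x t \<notin> C \<and> VV y t \<notin> C)"
        then have "t \<in> Iset m S i" unfolding C_def by auto
        then have "t \<notin> T" using nc by (auto simp: Iset_iff)
        then show False using no_horiz[OF h(1)] ab h(5) by simp
      qed
      then show ?thesis using h by simp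
    next
      case c4
      then show ?thesis unfolding C_def by auto
    qed
  qed
  have "(U i, Z) \<in> (H \<union> H\<inverse>)\<^sup>*"
    using sol U_V[OF i] Z_V unfolding st_solution_def DSC_F_def by blast
  then have "Z \<in> C"
  proof (induction rule: rtrancl_induct)
    case base then show ?case unfolding C_def by simp
  next
    case (step y z)
    then show ?case using clos by blast
  qed
  then show False unfolding C_def by auto
qed

end


lemma R_sym: "(a,b) \<in> (H \<union> H\<inverse>)\<^sup>* \<Longrightarrow> (b,a) \<in> (H \<union> H\<inverse>)\<^sup>*"
  by (metis converse_Un converse_converse rtrancl_converseI sup_commute)

context dsc begin

lemma hpath_set: "l \<in> {1..m} \<Longrightarrow> set (hpath S l) = insert Z ((\<lambda>x. VV x l) ` S l)"
  using fin_S unfolding hpath_def by simp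

lemma hpath_V: "l \<in> {1..m} \<Longrightarrow> set (hpath S l) \<subseteq> VS"
proof
  fix y assume l: "l \<in> {1..m}" and "y \<in> set (hpath S l)"
  then consider "y = Z" | x where "x \<in> S l" "y = VV x l" using hpath_set by auto
  then show "y \<in> VS"
  proof cases
    case 1 then show ?thesis using Z_V by simp
  next
    case 2
    then have "x \<in> {1..n}" "l \<in> Iset m S x" using in_S[OF l] by auto
    then show ?thesis using vpath_V 2 unfolding vpath_def by auto
  qed
qed

lemma hpath_A: "l \<in> {1..m} \<Longrightarrow> walk_arcs (hpath S l) \<subseteq> AS"
  unfolding DSC_A_def by blast

lemma vpath_A: "i \<in> {1..n} \<Longrightarrow> j \<in> Iset m S i \<Longrightarrow> walk_arcs (vpath i j) \<subseteq> AS"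
  unfolding DSC_A_def by blast

lemma ZZ_A: "l \<in> {1..k} \<Longrightarrow> (ZZ l, Z) \<in> AS"
  unfolding DSC_A_def by blast

lemma zwalk_arcs: "walk_arcs (ZZ t # hpath S l) = insert (ZZ t, Z) (walk_arcs (hpath S l))"
  unfolding hpath_def by simp

lemma B_cases: "0 < BS v \<Longrightarrow> (\<exists>i j. i\<in>{1..n} \<and> j \<in> Iset m S i \<and> v = UU i j) \<or> (\<exists>l\<in>{1..k}. v = ZZ l)"
  unfolding DSC_B_def by (cases "(\<exists>i\<in>{1..n}. \<exists>j\<in>Iset m S i. v = UU i j) \<or> (\<exists>l\<in>{1..k}. v = ZZ l)") auto

lemma B_le1: "BS v \<le> 1" unfolding DSC_B_def by simp

lemma good_solution:
  assumes T0: "finite T0" "T0 \<subseteq> {1..m}" "card T0 \<le> k" "\<forall>i\<in>{1..n}. \<exists>l\<in>T0. i \<in> S l"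
  shows "\<exists>W. st_solution VS AS DSC_F BS W
           \<and> (\<forall>i\<in>{1..n}. \<forall>j\<in>Iset m S i. W (UU i j) 0 = vpath i j)
           \<and> (\<forall>t\<in>{1..k}. \<exists>l\<in>{1..m}. W (ZZ t) 0 = ZZ t # hpath S l)"
proof -
  define L where "L t = (if t \<le> card T0 then sorted_list_of_set T0 ! (t - 1) else 1)" for t
  have L_in: "L t \<in> {1..m}" if "t \<in> {1..k}" for t
  proof (cases "t \<le> card T0")
    case True
    have "1 \<le> t" using that by simp
    then have "t - 1 < card T0" using True by linarith
    then have "t - 1 < length (sorted_list_of_set T0)" by simp
    then have "sorted_list_of_set T0 ! (t - 1) \<in> set (sorted_list_of_set T0)" by (rule nth_mem)
    then have "sorted_list_of_set T0 ! (t - 1) \<in> T0" using T0(1) by simp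
    then have "sorted_list_of_set T0 ! (t - 1) \<in> {1..m}" using T0(2) by blast
    moreover have "L t = sorted_list_of_set T0 ! (t - 1)" unfolding L_def using True by simp
    ultimately show ?thesis by simp
  next
    case False
    then have "L t = 1" unfolding L_def by simp
    then show ?thesis using k_ge k_le by simp
  qed
  have L_cover: "\<exists>t\<in>{1..k}. i \<in> S (L t)" if i: "i \<in> {1..n}" for i
  proof -
    have "\<exists>l\<in>T0. i \<in> S l" using T0(4) i by (rule bspec)
    then obtain l where l: "l \<in> T0" "i \<in> S l" by (rule bexE)
    have "l \<in> set (sorted_list_of_set T0)" using T0(1) l(1) by (simp only: set_sorted_list_of_set)
    then have "\<exists>q < length (sorted_list_of_set T0). sorted_list_of_set T0 ! q = l" by (simp only: in_set_conv_nth)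
    then obtain q where q: "q < length (sorted_list_of_set T0)" "sorted_list_of_set T0 ! q = l" by blast
    have c: "q + 1 \<le> card T0" using q(1) by simp
    have "L (q+1) = sorted_list_of_set T0 ! q" unfolding L_def using c by simp
    then have Lq: "L (q+1) = l" using q(2) by simp
    have "q + 1 \<in> {1..k}" using c T0(3) by simp
    moreover have "i \<in> S (L (q+1))" using Lq l(2) by simp
    ultimately show ?thesis by (rule bexI[rotated])
  qed
  define W where "W v i = (case v of UU a b \<Rightarrow> vpath a b | ZZ t \<Rightarrow> ZZ t # hpath S (L t) | _ \<Rightarrow> [v])" for v and i :: nat
  have walkW: "is_walk VS AS (W v 0) \<and> hd (W v 0) = v" if v: "0 < BS v" for v
  proof -
    from B_cases[OF v] show ?thesis
    proof (elim disjE exE conjE bexE)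
      fix i j assume h: "i \<in> {1..n}" "j \<in> Iset m S i" "v = UU i j"
      then show ?thesis unfolding W_def is_walk_iff using vpath_V[OF h(1,2)] vpath_A[OF h(1,2)]
        by (simp add: vpath_def)
    next
      fix l assume h: "l \<in> {1..k}" "v = ZZ l"
      have "set (W v 0) \<subseteq> VS" using h hpath_V[OF L_in[OF h(1)]] ZZ_V[OF h(1)] unfolding W_def by simp
      moreover have "walk_arcs (W v 0) \<subseteq> AS" using h hpath_A[OF L_in[OF h(1)]] ZZ_A[OF h(1)]
        by (simp add: W_def zwalk_arcs)
      ultimately show ?thesis unfolding is_walk_iff using h unfolding W_def by simp
    qed
  qed
  have vV: "v \<in> VS" if "0 < BS v" for v
    using B_cases[OF that] vpath_V ZZ_V unfolding vpath_def by auto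
  let ?H = "H_arcs VS BS W"
  have Hv: "set (W v 0) \<subseteq> H_vertices VS BS W" if "0 < BS v" for v
    unfolding H_vertices_def using vV[OF that] that by blast
  have Ha: "walk_arcs (W v 0) \<subseteq> ?H" if "0 < BS v" for v
    unfolding H_arcs_def using vV[OF that] that by blast
  have conn: "(x, y) \<in> (?H \<union> ?H\<inverse>)\<^sup>*" if "0 < BS v" "x \<in> set (W v 0)" "y \<in> set (W v 0)" for v x y
    using walk_conn[OF Ha[OF that(1)] that(2,3)] .
  have BUU: "0 < BS (UU i j)" if "i \<in> {1..n}" "j \<in> Iset m S i" for i j using B_UU[OF that] by simp
  have BZZ: "0 < BS (ZZ l)" if "l \<in> {1..k}" for l using B_ZZ[OF that] by simp
  have WUU: "W (UU i j) 0 = vpath i j" for i j unfolding W_def by simp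
  have WZZ: "W (ZZ l) 0 = ZZ l # hpath S (L l)" for l unfolding W_def by simp
  have ZZset: "Z \<in> set (W (ZZ l) 0)" "ZZ l \<in> set (W (ZZ l) 0)" for l unfolding WZZ hpath_def by simp_all
  have k1: "1 \<in> {1..k}" using k_ge by simp
  have U_conn: "(U i, Z) \<in> (?H \<union> ?H\<inverse>)\<^sup>*" if i: "i \<in> {1..n}" for i
  proof -
    obtain t where t: "t \<in> {1..k}" "i \<in> S (L t)" using L_cover[OF i] by blast
    have j: "L t \<in> Iset m S i" using in_S[OF L_in[OF t(1)] t(2)] by simp
    have 1: "(U i, VV i (L t)) \<in> (?H \<union> ?H\<inverse>)\<^sup>*"
      using conn[OF BUU[OF i j]] unfolding WUU vpath_def by simp
    have "VV i (L t) \<in> set (W (ZZ t) 0)" using t(2) hpath_set[OF L_in[OF t(1)]] unfolding WZZ by simp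
    then have 2: "(VV i (L t), Z) \<in> (?H \<union> ?H\<inverse>)\<^sup>*" using conn[OF BZZ[OF t(1)]] ZZset by blast
    show ?thesis using 1 2 by (rule rtrancl_trans)
  qed
  have all_conn: "(x, Z) \<in> (?H \<union> ?H\<inverse>)\<^sup>*" if x: "x \<in> VS" for x
  proof -
    from x consider (u) i where "i \<in> {1..n}" "x = U i"
      | (vp) i j where "i \<in> {1..n}" "j \<in> Iset m S i" "x \<in> set (vpath i j)"
      | (z) "x = Z" | (zz) l where "l \<in> {1..k}" "x = ZZ l"
      unfolding DSC_V_def by blast
    then show ?thesis
    proof cases
      case u then show ?thesis using U_conn by simp
    next
      case vp
      have "(x, U i) \<in> (?H \<union> ?H\<inverse>)\<^sup>*" using conn[OF BUU[OF vp(1,2)]] vp(3) unfolding WUU vpath_def by simp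
      then show ?thesis using U_conn[OF vp(1)] by (rule rtrancl_trans)
    next
      case z then show ?thesis by simp
    next
      case zz then show ?thesis using conn[OF BZZ[OF zz(1)]] ZZset by blast
    qed
  qed
  have cover: "x \<in> H_vertices VS BS W" if x: "x \<in> VS" for x
  proof -
    from x consider (u) i where "i \<in> {1..n}" "x = U i"
      | (vp) i j where "i \<in> {1..n}" "j \<in> Iset m S i" "x \<in> set (vpath i j)"
      | (z) "x = Z" | (zz) l where "l \<in> {1..k}" "x = ZZ l"
      unfolding DSC_V_def by blast
    then show ?thesis
    proof cases
      case u
      then obtain t where "t \<in> {1..m}" "i \<in> S t" using S_cover by blast
      then have "t \<in> Iset m S i" by (simp add: Iset_iff)
      then show ?thesis using Hv[OF BUU[OF u(1)]] u unfolding WUU vpath_def by auto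
    next
      case vp then show ?thesis using Hv[OF BUU[OF vp(1,2)]] unfolding WUU by auto
    next
      case z then show ?thesis using Hv[OF BZZ[OF k1]] ZZset by auto
    next
      case zz then show ?thesis using Hv[OF BZZ[OF zz(1)]] ZZset by auto
    qed
  qed
  have "st_solution VS AS DSC_F BS W"
    unfolding st_solution_def
  proof (intro conjI ballI allI impI)
    fix v i assume "v \<in> VS" "i < BS v"
    then have "i = 0" "0 < BS v" using B_le1[of v] by auto
    then show "is_walk VS AS (W v i)" "hd (W v i) = v" using walkW by auto
  next
    fix x assume "x \<in> VS" "DSC_F x = 1" then show "x \<in> H_vertices VS BS W" using cover by blast
  next
    fix x y assume "x \<in> VS" "y \<in> VS"
    then have "(x, Z) \<in> (?H \<union> ?H\<inverse>)\<^sup>*" "(Z, y) \<in> (?H \<union> ?H\<inverse>)\<^sup>*"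
      using all_conn[of x] R_sym[OF all_conn[of y]] by auto
    then show "(x, y) \<in> (?H \<union> ?H\<inverse>)\<^sup>*" by (rule rtrancl_trans)
  qed
  moreover have "\<forall>i\<in>{1..n}. \<forall>j\<in>Iset m S i. W (UU i j) 0 = vpath i j" using WUU by blast
  moreover have "\<forall>t\<in>{1..k}. \<exists>l\<in>{1..m}. W (ZZ t) 0 = ZZ t # hpath S l" using WZZ L_in by blast
  ultimately show ?thesis by blast
qed

end

theorem lemma7:
  fixes n m k :: nat and S :: "nat \<Rightarrow> nat set"
  assumes S_sub: "\<forall>t\<in>{1..m}. S t \<subseteq> {1..n}"
    and S_cover: "(\<Union>t\<in>{1..m}. S t) = {1..n}"
    and k_ge: "1 \<le> k" and k_le: "k \<le> m"
    and pos: "st_positive (DSC_V n m S k) (DSC_A n m S k) DSC_F (DSC_B n m S k)"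
  shows "\<exists>W. st_solution (DSC_V n m S k) (DSC_A n m S k) DSC_F (DSC_B n m S k) W
           \<and> (\<forall>i\<in>{1..n}. \<forall>j\<in>Iset m S i. W (UU i j) 0 = vpath i j)
           \<and> (\<forall>t\<in>{1..k}. \<exists>l\<in>{1..m}. W (ZZ t) 0 = ZZ t # hpath S l)"
proof -
  obtain W0 where W0: "st_solution (DSC_V n m S k) (DSC_A n m S k) DSC_F (DSC_B n m S k) W0"
    using pos unfolding st_positive_def by blast
  interpret sol n m k S W0 using assms W0 by unfold_locales auto
  show ?thesis using good_solution[OF T_fin T_sub card_T] T_cover by blast
qed


end
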